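(* Let $\mathcal H$ be a Hilbert space of dimension $d$, let $H(t_i)=\sum_l E^i_l\Pi^i_l$ and $H(t_f)=\sum_k E^f_k\Pi^f_k$ be Hermitian operators with spectral projectors $\Pi^i_l,\Pi^f_k$, let $\Phi$ be a CPTP map on $\mathcal H$ and $\beta>0$. Let $\gamma_{\beta,i}=e^{-\beta H(t_i)}/\mathcal Z_{\beta,i}$, $\gamma_{\beta,f}=e^{-\beta H(t_f)}/\mathcal Z_{\beta,f}$, $\Delta F=-\beta^{-1}\ln(\mathcal Z_{\beta,f}/\mathcal Z_{\beta,i})$. Let $\rho_i$ be a density operator decomposed as $$\rho_i=(1-a)\gamma_{\beta,i}+a(1-c)\tau_d+ac\,\tau_c,$$ where $a$ is the weight of athermality of $\rho_i$ with respect to $\gamma_{\beta,i}$ with minimal athermal state $\tau$, and $\tau=(1-c)\tau_d+c\tau_c$ with $c$ the weight of coherence of $\tau$ with respect to the eigenbasis of $H(t_i)$, $\tau_d$ a density operator diagonal in that basis and $\tau_c$ a density operator. Then the EPM average satisfies $$\big\langle e^{-\beta(\Delta E-\Delta F)}\big\rangle=\Big\{(1-a)d+a(1-c)\mathrm{Tr}(\gamma_{\beta,i}^{-1}\tau_d)+ac\,\mathrm{Tr}(\gamma_{\beta,i}^{-1}\tau_c)\Big\}\Big\{(1-a)\mathrm{Tr}(\gamma_{\beta,f}\Phi[\gamma_{\beta,i}])+a(1-c)\mathrm{Tr}(\gamma_{\beta,f}\Phi[\tau_d])+ac\,\mathrm{Tr}(\gamma_{\beta,f}\Phi[\tau_c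])\Big\}.$$
   Context: EPM statistics: for initial state $\rho_i$, $p^{l,k}=\mathrm{Tr}(\rho_i\Pi^i_l)\mathrm{Tr}(\Phi[\rho_i]\Pi^f_k)$, $\Delta E_{l,k}=E^f_k-E^i_l$, and $\langle g(\Delta E)\rangle=\sum_{l,k}p^{l,k}g(\Delta E_{l,k})$. Weight of athermality: $A_w(\rho)=\min_{\tau\in\mathscr D(\mathcal H)}\{a\ge0:\rho=(1-a)\gamma_{\beta,i}+a\tau\}$ ($\mathscr D(\mathcal H)$ = density operators); $\tau$ attaining it is the minimal athermal state. Weight of coherence with respect to a fixed basis: $C_w(\tau)=\min\{c\ge0:\tau=(1-c)\sigma+c\tau',\ \sigma \text{ diagonal in the basis},\ \tau'\in\mathscr D(\mathcal H)\}$, with $\tau_d=\sigma$, $\tau_c=\tau'$ an optimal pair. *)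

theory Defs
  imports "Jordan_Normal_Form.Schur_Decomposition" "Jordan_Normal_Form.Gauss_Jordan_Elimination"
begin

definition tr :: "complex mat \<Rightarrow> complex" where
  "tr A = (\<Sum>i<dim_row A. A $$ (i,i))"

definition msum :: "nat \<Rightarrow> ('i \<Rightarrow> complex mat) \<Rightarrow> 'i set \<Rightarrow> complex mat" where
  "msum d f L = mat d d (\<lambda>(r,s). \<Sum>l\<in>L. f l $$ (r,s))"

definition rsmult :: "real \<Rightarrow> complex mat \<Rightarrow> complex mat" (infixr "\<cdot>\<^sub>r" 70) where
  "a \<cdot>\<^sub>r A = complex_of_real a \<cdot>\<^sub>m A"

definition hermitian :: "nat \<Rightarrow> complex mat \<Rightarrow> bool" where
  "hermitian d A \<longleftrightarrow> A \<in> carrier_mat d d \<and> mat_adjoint A = A"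

definition psd :: "nat \<Rightarrow> complex mat \<Rightarrow> bool" where
  "psd d A \<longleftrightarrow> A \<in> carrier_mat d d \<and>
     (\<forall>v \<in> carrier_vec d. let q = (\<Sum>i<d. cnj (v $ i) * (A *\<^sub>v v) $ i) in Im q = 0 \<and> Re q \<ge> 0)"

definition density :: "nat \<Rightarrow> complex mat \<Rightarrow> bool" where
  "density d \<rho> \<longleftrightarrow> psd d \<rho> \<and> tr \<rho> = 1"

definition unitary :: "nat \<Rightarrow> complex mat \<Rightarrow> bool" where
  "unitary d U \<longleftrightarrow> U \<in> carrier_mat d d \<and> mat_adjoint U * U = 1\<^sub>m d \<and> U * mat_adjoint U = 1\<^sub>m d"

definition spectral_decomp :: "nat \<Rightarrow> complex mat \<Rightarrow> nat \<Rightarrow> (nat \<Rightarrow> real) \<Rightarrow> (nat \<Rightarrow> complex mat) \<Rightarrow> bool" where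
  "spectral_decomp d H m E P \<longleftrightarrow>
     hermitian d H \<and> inj_on E {..<m} \<and>
     (\<forall>l<m. hermitian d (P l) \<and> P l * P l = P l \<and> P l \<noteq> 0\<^sub>m d d) \<and>
     (\<forall>l<m. \<forall>k<m. l \<noteq> k \<longrightarrow> P l * P k = 0\<^sub>m d d) \<and>
     msum d P {..<m} = 1\<^sub>m d \<and>
     H = msum d (\<lambda>l. E l \<cdot>\<^sub>r P l) {..<m}"

definition mat_fun :: "nat \<Rightarrow> nat \<Rightarrow> (nat \<Rightarrow> real) \<Rightarrow> (nat \<Rightarrow> complex mat) \<Rightarrow> (real \<Rightarrow> real) \<Rightarrow> complex mat" where
  "mat_fun d m E P f = msum d (\<lambda>l. f (E l) \<cdot>\<^sub>r P l) {..<m}"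

definition part_fn :: "nat \<Rightarrow> nat \<Rightarrow> (nat \<Rightarrow> real) \<Rightarrow> (nat \<Rightarrow> complex mat) \<Rightarrow> real \<Rightarrow> real" where
  "part_fn d m E P \<beta> = Re (tr (mat_fun d m E P (\<lambda>x. exp (- \<beta> * x))))"

definition gibbs :: "nat \<Rightarrow> nat \<Rightarrow> (nat \<Rightarrow> real) \<Rightarrow> (nat \<Rightarrow> complex mat) \<Rightarrow> real \<Rightarrow> complex mat" where
  "gibbs d m E P \<beta> = (1 / part_fn d m E P \<beta>) \<cdot>\<^sub>r mat_fun d m E P (\<lambda>x. exp (- \<beta> * x))"

definition mat_inv :: "complex mat \<Rightarrow> complex mat" where
  "mat_inv A = the (mat_inverse A)"

(* (id_n \<otimes> Phi) applied to an (n*d) x (n*d) matrix viewed as n x n blocks of size d x d *)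
definition ampliate :: "nat \<Rightarrow> nat \<Rightarrow> (complex mat \<Rightarrow> complex mat) \<Rightarrow> complex mat \<Rightarrow> complex mat" where
  "ampliate n d \<Phi> X = mat (n*d) (n*d) (\<lambda>(p,q).
      \<Phi> (mat d d (\<lambda>(r,s). X $$ ((p div d) * d + r, (q div d) * d + s))) $$ (p mod d, q mod d))"

definition cptp :: "nat \<Rightarrow> (complex mat \<Rightarrow> complex mat) \<Rightarrow> bool" where
  "cptp d \<Phi> \<longleftrightarrow>
     (\<forall>A \<in> carrier_mat d d. \<Phi> A \<in> carrier_mat d d) \<and>
     (\<forall>A \<in> carrier_mat d d. \<forall>B \<in> carrier_mat d d. \<Phi> (A + B) = \<Phi> A + \<Phi> B) \<and>
     (\<forall>A \<in> carrier_mat d d. \<forall>c. \<Phi> (c \<cdot>\<^sub>m A) = c \<cdot>\<^sub>m \<Phi> A) \<and>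
     (\<forall>A \<in> carrier_mat d d. tr (\<Phi> A) = tr A) \<and>
     (\<forall>n X. psd (n*d) X \<longrightarrow> psd (n*d) (ampliate n d \<Phi> X))"

(* diagonal in the orthonormal basis given by the columns of U *)
definition diag_in :: "complex mat \<Rightarrow> complex mat \<Rightarrow> bool" where
  "diag_in U A \<longleftrightarrow> diagonal_mat (mat_adjoint U * A * U)"

definition athermality_weight :: "nat \<Rightarrow> complex mat \<Rightarrow> complex mat \<Rightarrow> real" where
  "athermality_weight d \<gamma> \<rho> =
     Inf {a. a \<ge> 0 \<and> (\<exists>\<tau>. density d \<tau> \<and> \<rho> = (1 - a) \<cdot>\<^sub>r \<gamma> + a \<cdot>\<^sub>r \<tau>)}"

definition coherence_weight :: "nat \<Rightarrow> complex mat \<Rightarrow> complex mat \<Rightarrow> real" where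
  "coherence_weight d U \<tau> =
     Inf {c. c \<ge> 0 \<and> (\<exists>\<sigma> \<tau>'. density d \<sigma> \<and> diag_in U \<sigma> \<and> density d \<tau>' \<and>
                         \<tau> = (1 - c) \<cdot>\<^sub>r \<sigma> + c \<cdot>\<^sub>r \<tau>')}"

definition epm_avg :: "nat \<Rightarrow> (nat \<Rightarrow> real) \<Rightarrow> (nat \<Rightarrow> complex mat) \<Rightarrow>
    nat \<Rightarrow> (nat \<Rightarrow> real) \<Rightarrow> (nat \<Rightarrow> complex mat) \<Rightarrow> (complex mat \<Rightarrow> complex mat) \<Rightarrow>
    complex mat \<Rightarrow> (real \<Rightarrow> complex) \<Rightarrow> complex" where
  "epm_avg mi Ei Qi mf Ef Qf \<Phi> \<rho> g =
     (\<Sum>l<mi. \<Sum>k<mf. tr (\<rho> * Qi l) * tr (\<Phi> \<rho> * Qf k) * g (Ef k - Ei l))"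

end

theory Submission
  imports Defs
begin

lemma msum_carrier[simp]: "msum d F L \<in> carrier_mat d d"
  by (simp add: msum_def)

lemma msum_dims[simp]: "dim_row (msum d F L) = d" "dim_col (msum d F L) = d"
  by (simp_all add: msum_def)

lemma msum_index[simp]: "r < d \<Longrightarrow> s < d \<Longrightarrow> msum d F L $$ (r,s) = (\<Sum>l\<in>L. F l $$ (r,s))"
  by (simp add: msum_def)

lemma rsmult_index[simp]: "i < dim_row A \<Longrightarrow> j < dim_col A \<Longrightarrow> (a \<cdot>\<^sub>r A) $$ (i,j) = complex_of_real a * A $$ (i,j)"
  by (simp add: rsmult_def)

lemma rsmult_dims[simp]: "dim_row (a \<cdot>\<^sub>r A) = dim_row A" "dim_col (a \<cdot>\<^sub>r A) = dim_col A"
  by (simp_all add: rsmult_def)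

lemma rsmult_carrier[simp]: "A \<in> carrier_mat d d \<Longrightarrow> a \<cdot>\<^sub>r A \<in> carrier_mat d d"
  by (simp add: rsmult_def)

lemma mult_index_sum: assumes "A \<in> carrier_mat d d" "B \<in> carrier_mat d d" "i < d" "j < d"
  shows "(A * B) $$ (i,j) = (\<Sum>k<d. A $$ (i,k) * B $$ (k,j))"
  using assms by (simp add: scalar_prod_def atLeast0LessThan)

lemma tr_mult: assumes "A \<in> carrier_mat d d" "B \<in> carrier_mat d d"
  shows "tr (A * B) = (\<Sum>i<d. \<Sum>k<d. A $$ (i,k) * B $$ (k,i))"
  using assms unfolding tr_def by (auto intro!: sum.cong simp: scalar_prod_def atLeast0LessThan)

lemma tr_comm: assumes "A \<in> carrier_mat d d" "B \<in> carrier_mat d d"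
  shows "tr (A * B) = tr (B * A)"
  unfolding tr_mult[OF assms] tr_mult[OF assms(2,1)]
  by (subst sum.swap) (simp add: mult.commute)

lemma tr_add: assumes "X \<in> carrier_mat d d" "A \<in> carrier_mat d d" "B \<in> carrier_mat d d"
  shows "tr (X * (A + B)) = tr (X * A) + tr (X * B)"
proof -
  have "X * (A + B) = X * A + X * B" using assms by (simp add: mult_add_distrib_mat)
  thus ?thesis using assms by (simp add: tr_def sum.distrib)
qed

lemma tr_smult: assumes "X \<in> carrier_mat d d" "A \<in> carrier_mat d d"
  shows "tr (X * (a \<cdot>\<^sub>r A)) = complex_of_real a * tr (X * A)"
proof -
  have "X * (a \<cdot>\<^sub>r A) = complex_of_real a \<cdot>\<^sub>m (X * A)" using assms
    by (simp add: rsmult_def mult_smult_distrib)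
  thus ?thesis using assms by (simp add: tr_def sum_distrib_left)
qed

lemma tr_one: "tr (1\<^sub>m d) = of_nat d"
  by (simp add: tr_def)

lemma tr_msum: assumes "X \<in> carrier_mat d d" "\<And>l. l \<in> L \<Longrightarrow> P l \<in> carrier_mat d d" "finite L"
  shows "tr (X * msum d (\<lambda>l. f l \<cdot>\<^sub>r P l) L) = (\<Sum>l\<in>L. complex_of_real (f l) * tr (X * P l))"
proof -
  have "tr (X * msum d (\<lambda>l. f l \<cdot>\<^sub>r P l) L) = (\<Sum>i<d. \<Sum>k<d. X $$ (i,k) * (\<Sum>l\<in>L. complex_of_real (f l) * P l $$ (k,i)))"
    using assms by (auto simp add: tr_mult intro!: sum.cong rsmult_index dest!: assms(2))
  also have "\<dots> = (\<Sum>i<d. \<Sum>k<d. \<Sum>l\<in>L. complex_of_real (f l) * (X $$ (i,k) * P l $$ (k,i)))"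
    by (simp add: sum_distrib_left ac_simps)
  also have "\<dots> = (\<Sum>i<d. \<Sum>l\<in>L. \<Sum>k<d. complex_of_real (f l) * (X $$ (i,k) * P l $$ (k,i)))"
    by (rule sum.cong[OF refl], rule sum.swap)
  also have "\<dots> = (\<Sum>l\<in>L. \<Sum>i<d. \<Sum>k<d. complex_of_real (f l) * (X $$ (i,k) * P l $$ (k,i)))"
    by (rule sum.swap)
  also have "\<dots> = (\<Sum>l\<in>L. complex_of_real (f l) * tr (X * P l))"
    using assms by (simp add: tr_mult sum_distrib_left)
  finally show ?thesis .
qed

lemma sum_if_eq: "x < (m::nat) \<Longrightarrow> (\<Sum>k<m. (c k :: complex) * (if x = k then p else 0)) = c x * p"
proof -
  assume "x < m"
  have "(\<Sum>k<m. c k * (if x = k then p else 0)) = (\<Sum>k<m. if x = k then c k * p else 0)"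
    by (rule sum.cong) auto
  thus ?thesis using \<open>x < m\<close> by (subst (asm) sum.delta') auto
qed

lemma rsmult_index_c: "A \<in> carrier_mat d d \<Longrightarrow> i < d \<Longrightarrow> j < d \<Longrightarrow> (a \<cdot>\<^sub>r A) $$ (i,j) = complex_of_real a * A $$ (i,j)"
  by (simp add: rsmult_def)

lemma msum_prod:
  fixes m :: nat
  assumes P: "\<And>l. l < m \<Longrightarrow> P l \<in> carrier_mat d d"
    and orth: "\<And>l k. l < m \<Longrightarrow> k < m \<Longrightarrow> l \<noteq> k \<Longrightarrow> P l * P k = 0\<^sub>m d d"
    and idem: "\<And>l. l < m \<Longrightarrow> P l * P l = P l"
  shows "msum d (\<lambda>l. f l \<cdot>\<^sub>r P l) {..<m} * msum d (\<lambda>l. g l \<cdot>\<^sub>r P l) {..<m}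
       = msum d (\<lambda>l. (f l * g l) \<cdot>\<^sub>r P l) {..<m}"
proof (rule eq_matI)
  fix i j assume "i < dim_row (msum d (\<lambda>l. (f l * g l) \<cdot>\<^sub>r P l) {..<m})"
    "j < dim_col (msum d (\<lambda>l. (f l * g l) \<cdot>\<^sub>r P l) {..<m})"
  hence ij: "i < d" "j < d" by auto
  have dims: "\<And>l. l < m \<Longrightarrow> dim_row (P l) = d \<and> dim_col (P l) = d" using P by auto
  have pp: "(\<Sum>r<d. P l $$ (i,r) * P k $$ (r,j)) = (if l = k then P l $$ (i,j) else 0)"
    if "l < m" "k < m" for l k
  proof -
    have "(\<Sum>r<d. P l $$ (i,r) * P k $$ (r,j)) = (P l * P k) $$ (i,j)"
      using mult_index_sum[OF P[OF that(1)] P[OF that(2)] ij] by simp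
    thus ?thesis using orth[OF that] idem[OF that(1)] ij by auto
  qed
  have "(msum d (\<lambda>l. f l \<cdot>\<^sub>r P l) {..<m} * msum d (\<lambda>l. g l \<cdot>\<^sub>r P l) {..<m}) $$ (i,j)
      = (\<Sum>r<d. (\<Sum>l<m. complex_of_real (f l) * P l $$ (i,r)) * (\<Sum>k<m. complex_of_real (g k) * P k $$ (r,j)))"
    using ij dims by (subst mult_index_sum[of _ d]) (auto intro!: sum.cong)
  also have "\<dots> = (\<Sum>r<d. \<Sum>l<m. \<Sum>k<m. complex_of_real (f l * g k) * (P l $$ (i,r) * P k $$ (r,j)))"
    by (simp add: sum_product ac_simps)
  also have "\<dots> = (\<Sum>l<m. \<Sum>r<d. \<Sum>k<m. complex_of_real (f l * g k) * (P l $$ (i,r) * P k $$ (r,j)))"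
    by (rule sum.swap)
  also have "\<dots> = (\<Sum>l<m. \<Sum>k<m. \<Sum>r<d. complex_of_real (f l * g k) * (P l $$ (i,r) * P k $$ (r,j)))"
    by (rule sum.cong[OF refl], rule sum.swap)
  also have "\<dots> = (\<Sum>l<m. \<Sum>k<m. complex_of_real (f l * g k) * (if l = k then P l $$ (i,j) else 0))"
    by (rule sum.cong[OF refl], rule sum.cong[OF refl]) (simp add: sum_distrib_left[symmetric] pp)
  also have "\<dots> = (\<Sum>l<m. complex_of_real (f l * g l) * P l $$ (i,j))"
  proof (rule sum.cong[OF refl])
    fix l assume "l \<in> {..<m}"
    hence "l < m" by simp
    show "(\<Sum>k<m. complex_of_real (f l * g k) * (if l = k then P l $$ (i,j) else 0))
        = complex_of_real (f l * g l) * P l $$ (i,j)"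
      by (rule sum_if_eq[OF \<open>l < m\<close>, where c = "\<lambda>k. complex_of_real (f l * g k)"])
  qed
  also have "\<dots> = msum d (\<lambda>l. (f l * g l) \<cdot>\<^sub>r P l) {..<m} $$ (i,j)"
    using ij dims by (auto intro!: sum.cong)
  finally show "(msum d (\<lambda>l. f l \<cdot>\<^sub>r P l) {..<m} * msum d (\<lambda>l. g l \<cdot>\<^sub>r P l) {..<m}) $$ (i,j)
      = msum d (\<lambda>l. (f l * g l) \<cdot>\<^sub>r P l) {..<m} $$ (i,j)" .
qed auto

lemma msum_one:
  fixes m :: nat
  assumes P: "\<And>l. l < m \<Longrightarrow> P l \<in> carrier_mat d d" and S: "msum d P {..<m} = 1\<^sub>m d"
    and f: "\<And>l. l < m \<Longrightarrow> f l = 1"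
  shows "msum d (\<lambda>l. f l \<cdot>\<^sub>r P l) {..<m} = 1\<^sub>m d"
proof -
  have "msum d (\<lambda>l. f l \<cdot>\<^sub>r P l) {..<m} = msum d P {..<m}"
    unfolding msum_def using f by (auto intro!: eq_matI sum.cong simp: rsmult_index_c[OF P])
  thus ?thesis using S by simp
qed

lemma mat_inv_eq: assumes "A \<in> carrier_mat n n" "B \<in> carrier_mat n n" "A * B = 1\<^sub>m n" "B * A = 1\<^sub>m n"
  shows "mat_inv A = B"
proof -
  have U: "A \<in> Units (ring_mat TYPE(complex) n undefined)"
    using assms unfolding Units_def by (auto simp: ring_mat_simps)
  then obtain B' where B': "mat_inverse A = Some B'"
    using mat_inverse(1)[OF assms(1), of undefined] by (cases "mat_inverse A") auto
  from mat_inverse(2)[OF assms(1) B'] have h: "A * B' = 1\<^sub>m n" "B' * A = 1\<^sub>m n" "B' \<in> carrier_mat n n" by auto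
  have "B' = B' * (A * B)" unfolding assms(3) using right_mult_one_mat[OF h(3)] by simp
  also have "\<dots> = (B' * A) * B" by (rule assoc_mult_mat[OF h(3) assms(1) assms(2), symmetric])
  also have "\<dots> = B" unfolding h(2) using left_mult_one_mat[OF assms(2)] by simp
  finally show ?thesis using B' by (simp add: mat_inv_def)
qed

lemma gibbs_msum: assumes "\<And>l. l < m \<Longrightarrow> P l \<in> carrier_mat d d" shows "gibbs d m E P \<beta> = msum d (\<lambda>l. (exp (- \<beta> * E l) / part_fn d m E P \<beta>) \<cdot>\<^sub>r P l) {..<m}"
  unfolding gibbs_def mat_fun_def
  by (intro eq_matI) (auto simp: msum_def sum_distrib_left rsmult_index_c[OF assms] intro!: sum.cong)


lemma adjoint_index: "i < dim_col A \<Longrightarrow> j < dim_row A \<Longrightarrow> mat_adjoint A $$ (i,j) = cnj (A $$ (j,i))"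
  unfolding mat_adjoint_def by (simp add: mat_of_rows_index)

lemma tr_proj_pos:
  assumes h: "hermitian d P" and idem: "P * P = P" and nz: "P \<noteq> 0\<^sub>m d d"
  shows "Re (tr P) > 0"
proof -
  have P: "P \<in> carrier_mat d d" and adj: "mat_adjoint P = P" using h by (auto simp: hermitian_def)
  have hsym: "P $$ (i,k) = cnj (P $$ (k,i))" if "i < d" "k < d" for i k
  proof -
    have "P $$ (i,k) = mat_adjoint P $$ (i,k)" using adj by simp
    also have "\<dots> = cnj (P $$ (k,i))" using P that by (simp add: adjoint_index)
    finally show ?thesis .
  qed
  obtain i0 k0 where i0: "i0 < d" "k0 < d" "P $$ (i0,k0) \<noteq> 0"
  proof -
    have "\<not> (\<forall>i<d. \<forall>k<d. P $$ (i,k) = 0)"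
    proof
      assume "\<forall>i<d. \<forall>k<d. P $$ (i,k) = 0"
      hence "P = 0\<^sub>m d d" using P by (intro eq_matI) auto
      with nz show False by simp
    qed
    thus ?thesis using that by blast
  qed
  have "tr P = tr (P * P)" using idem by simp
  also have "\<dots> = (\<Sum>i<d. \<Sum>k<d. P $$ (i,k) * P $$ (k,i))" by (rule tr_mult[OF P P])
  also have "\<dots> = (\<Sum>i<d. \<Sum>k<d. complex_of_real ((cmod (P $$ (i,k)))\<^sup>2))"
  proof (intro sum.cong refl)
    fix i k assume "i \<in> {..<d}" "k \<in> {..<d}"
    hence "P $$ (k,i) = cnj (P $$ (i,k))" by (intro hsym) auto
    thus "P $$ (i,k) * P $$ (k,i) = complex_of_real ((cmod (P $$ (i,k)))\<^sup>2)"
      by (simp only: complex_norm_square norm_complex_def[symmetric])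
  qed
  finally have "Re (tr P) = (\<Sum>i<d. \<Sum>k<d. (cmod (P $$ (i,k)))\<^sup>2)" by simp
  also have "\<dots> > 0"
  proof -
    have nn: "0 \<le> (\<Sum>k<d. (cmod (P $$ (i,k)))\<^sup>2)" for i by (intro sum_nonneg) simp
    have "0 < (cmod (P $$ (i0,k0)))\<^sup>2" using i0(3) by simp
    hence "0 < (\<Sum>k<d. (cmod (P $$ (i0,k)))\<^sup>2)"
      using sum_pos2[of "{..<d}" k0 "\<lambda>k. (cmod (P $$ (i0,k)))\<^sup>2"] i0(2) by simp
    thus ?thesis
      using sum_pos2[of "{..<d}" i0 "\<lambda>i. (\<Sum>k<d. (cmod (P $$ (i,k)))\<^sup>2)"] i0(1) nn by simp
  qed
  finally show ?thesis .
qed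

lemma exp_identity:
  assumes "(\<beta>::real) > 0" "Zi > 0" "Zf > 0"
  shows "exp (- \<beta> * (F - E - (- (1 / \<beta>) * ln (Zf / Zi)))) = (Zi * exp (\<beta> * E)) * (exp (- \<beta> * F) / Zf)"
proof -
  have "- \<beta> * (F - E - (- (1 / \<beta>) * ln (Zf / Zi))) = \<beta> * E + (- \<beta> * F) - ln (Zf / Zi)"
    using assms by (simp add: field_simps)
  hence "exp (- \<beta> * (F - E - (- (1 / \<beta>) * ln (Zf / Zi)))) = exp (\<beta> * E + (- \<beta> * F) - ln (Zf / Zi))" by simp
  also have "\<dots> = exp (\<beta> * E) * exp (- \<beta> * F) / (Zf / Zi)"
    using assms by (simp only: exp_diff exp_add exp_ln divide_pos_pos)
  also have "\<dots> = (Zi * exp (\<beta> * E)) * (exp (- \<beta> * F) / Zf)"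
    using assms by (simp add: divide_simps)
  finally show ?thesis .
qed

lemma spec_facts:
  assumes "spectral_decomp d H m E P"
  shows "\<And>l. l < m \<Longrightarrow> P l \<in> carrier_mat d d"
    and "\<And>l. l < m \<Longrightarrow> P l * P l = P l"
    and "\<And>l k. l < m \<Longrightarrow> k < m \<Longrightarrow> l \<noteq> k \<Longrightarrow> P l * P k = 0\<^sub>m d d"
    and "msum d P {..<m} = 1\<^sub>m d"
    and "\<And>l. l < m \<Longrightarrow> hermitian d (P l)"
    and "\<And>l. l < m \<Longrightarrow> P l \<noteq> 0\<^sub>m d d"
  using assms unfolding spectral_decomp_def hermitian_def by auto

lemma spec_m_pos: assumes "spectral_decomp d H m E P" "d > 0" shows "m > 0"
proof (rule ccontr)
  assume "\<not> m > 0" hence "m = 0" by simp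
  hence "msum d P {..<m} $$ (0,0) = 0" using assms(2) by simp
  moreover have "1\<^sub>m d $$ (0,0) = (1::complex)" using assms(2) by simp
  ultimately show False using spec_facts(4)[OF assms(1)] by simp
qed

lemma part_fn_pos: assumes "spectral_decomp d H m E P" "m > 0"
  shows "part_fn d m E P \<beta> > 0"
proof -
  note sf = spec_facts[OF assms(1)]
  let ?M = "msum d (\<lambda>l. exp (- \<beta> * E l) \<cdot>\<^sub>r P l) {..<m}"
  have "tr ?M = tr (1\<^sub>m d * ?M)" by (simp add: left_mult_one_mat)
  also have "\<dots> = (\<Sum>l<m. complex_of_real (exp (- \<beta> * E l)) * tr (1\<^sub>m d * P l))"
    by (rule tr_msum) (auto simp: sf)
  also have "\<dots> = (\<Sum>l<m. complex_of_real (exp (- \<beta> * E l)) * tr (P l))"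
    by (intro sum.cong refl) (simp add: left_mult_one_mat[OF sf(1)])
  finally have "part_fn d m E P \<beta> = (\<Sum>l<m. exp (- \<beta> * E l) * Re (tr (P l)))"
    by (simp add: part_fn_def mat_fun_def)
  also have "\<dots> > 0"
    using assms(2) by (intro sum_pos) (auto intro!: mult_pos_pos tr_proj_pos sf(2,5) simp: sf(6))
  finally show ?thesis .
qed

theorem mainTheorem3:
  fixes d mi mf :: nat and Ei Ef :: "nat \<Rightarrow> real" and Qi Qf :: "nat \<Rightarrow> complex mat"
    and Hi Hf U \<rho> \<tau> \<tau>d \<tau>c :: "complex mat" and \<Phi> :: "complex mat \<Rightarrow> complex mat"
    and \<beta> a c :: real
  assumes "spectral_decomp d Hi mi Ei Qi"
    and "spectral_decomp d Hf mf Ef Qf"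
    and "cptp d \<Phi>"
    and "\<beta> > 0"
    and "unitary d U" and "diag_in U Hi"
    and "density d \<rho>"
    and "a = athermality_weight d (gibbs d mi Ei Qi \<beta>) \<rho>"
    and "density d \<tau>" and "\<rho> = (1 - a) \<cdot>\<^sub>r gibbs d mi Ei Qi \<beta> + a \<cdot>\<^sub>r \<tau>"
    and "c = coherence_weight d U \<tau>"
    and "density d \<tau>d" and "diag_in U \<tau>d" and "density d \<tau>c"
    and "\<tau> = (1 - c) \<cdot>\<^sub>r \<tau>d + c \<cdot>\<^sub>r \<tau>c"
    and "\<rho> = (1 - a) \<cdot>\<^sub>r gibbs d mi Ei Qi \<beta> + (a * (1 - c)) \<cdot>\<^sub>r \<tau>d + (a * c) \<cdot>\<^sub>r \<tau>c"
  shows "epm_avg mi Ei Qi mf Ef Qf \<Phi> \<rho>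
           (\<lambda>\<Delta>E. complex_of_real (exp (- \<beta> * (\<Delta>E -
              (- (1 / \<beta>) * ln (part_fn d mf Ef Qf \<beta> / part_fn d mi Ei Qi \<beta>))))))
       = (complex_of_real ((1 - a) * real d)
            + complex_of_real (a * (1 - c)) * tr (mat_inv (gibbs d mi Ei Qi \<beta>) * \<tau>d)
            + complex_of_real (a * c) * tr (mat_inv (gibbs d mi Ei Qi \<beta>) * \<tau>c))
       * (complex_of_real (1 - a) * tr (gibbs d mf Ef Qf \<beta> * \<Phi> (gibbs d mi Ei Qi \<beta>))
            + complex_of_real (a * (1 - c)) * tr (gibbs d mf Ef Qf \<beta> * \<Phi> \<tau>d)
            + complex_of_real (a * c) * tr (gibbs d mf Ef Qf \<beta> * \<Phi> \<tau>c))"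
proof -
  note si = spec_facts[OF assms(1)] and sf = spec_facts[OF assms(2)]
  have cp: "\<And>A. A \<in> carrier_mat d d \<Longrightarrow> \<Phi> A \<in> carrier_mat d d"
    "\<And>A B. A \<in> carrier_mat d d \<Longrightarrow> B \<in> carrier_mat d d \<Longrightarrow> \<Phi> (A + B) = \<Phi> A + \<Phi> B"
    "\<And>A c. A \<in> carrier_mat d d \<Longrightarrow> \<Phi> (c \<cdot>\<^sub>m A) = c \<cdot>\<^sub>m \<Phi> A"
    using assms(3) unfolding cptp_def by auto
  let ?gi = "gibbs d mi Ei Qi \<beta>" and ?gf = "gibbs d mf Ef Qf \<beta>"
  let ?Zi = "part_fn d mi Ei Qi \<beta>" and ?Zf = "part_fn d mf Ef Qf \<beta>"
  have gi_car: "?gi \<in> carrier_mat d d" and gf_car: "?gf \<in> carrier_mat d d"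
    by (simp_all add: gibbs_def rsmult_def mat_fun_def)
  have rho_car: "\<rho> \<in> carrier_mat d d" using assms(7) by (simp add: density_def psd_def)
  have td_car: "\<tau>d \<in> carrier_mat d d" using assms(12) by (simp add: density_def psd_def)
  have tc_car: "\<tau>c \<in> carrier_mat d d" using assms(14) by (simp add: density_def psd_def)
  show ?thesis
  proof (cases "d = 0")
    case True
    have "mi = 0"
    proof (rule ccontr)
      assume "mi \<noteq> 0"
      hence "Qi 0 \<in> carrier_mat 0 0" "Qi 0 \<noteq> 0\<^sub>m 0 0" using si(1,6)[of 0] True by auto
      thus False by (metis carrier_matD(1) carrier_matD(2) eq_matI less_nat_zero_code zero_carrier_mat)
    qed
    hence L: "epm_avg mi Ei Qi mf Ef Qf \<Phi> \<rho>
           (\<lambda>\<Delta>E. complex_of_real (exp (- \<beta> * (\<Delta>E -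
              (- (1 / \<beta>) * ln (part_fn d mf Ef Qf \<beta> / part_fn d mi Ei Qi \<beta>)))))) = 0"
      by (simp add: epm_avg_def)
    have "\<And>X. tr (?gf * X) = 0" using gf_car True by (simp add: tr_def)
    thus ?thesis using L by simp
  next
    case False
    hence dpos: "d > 0" by simp
    have Zi: "?Zi > 0" by (rule part_fn_pos[OF assms(1) spec_m_pos[OF assms(1) dpos]])
    have Zf: "?Zf > 0" by (rule part_fn_pos[OF assms(2) spec_m_pos[OF assms(2) dpos]])
    define B where "B = msum d (\<lambda>l. (?Zi * exp (\<beta> * Ei l)) \<cdot>\<^sub>r Qi l) {..<mi}"
    have B_car: "B \<in> carrier_mat d d" by (simp add: B_def)
    have gi: "?gi = msum d (\<lambda>l. (exp (- \<beta> * Ei l) / ?Zi) \<cdot>\<^sub>r Qi l) {..<mi}"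
      by (rule gibbs_msum) (rule si(1))
    have gf: "?gf = msum d (\<lambda>l. (exp (- \<beta> * Ef l) / ?Zf) \<cdot>\<^sub>r Qf l) {..<mf}"
      by (rule gibbs_msum) (rule sf(1))
    have one1: "exp (- \<beta> * Ei l) / ?Zi * (?Zi * exp (\<beta> * Ei l)) = 1" for l
      using Zi by (simp add: field_simps exp_minus)
    have one2: "?Zi * exp (\<beta> * Ei l) * (exp (- \<beta> * Ei l) / ?Zi) = 1" for l
      using Zi by (simp add: field_simps exp_minus)
    have "?gi * B = msum d (\<lambda>l. (exp (- \<beta> * Ei l) / ?Zi * (?Zi * exp (\<beta> * Ei l))) \<cdot>\<^sub>r Qi l) {..<mi}"
      unfolding gi B_def by (rule msum_prod) (auto simp: si)
    also have "\<dots> = 1\<^sub>m d" by (rule msum_one) (blast intro: si(1) si(4) one1)+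
    finally have inv1: "?gi * B = 1\<^sub>m d" .
    have "B * ?gi = msum d (\<lambda>l. (?Zi * exp (\<beta> * Ei l) * (exp (- \<beta> * Ei l) / ?Zi)) \<cdot>\<^sub>r Qi l) {..<mi}"
      unfolding gi B_def by (rule msum_prod) (auto simp: si)
    also have "\<dots> = 1\<^sub>m d" by (rule msum_one) (blast intro: si(1) si(4) one2)+
    finally have inv2: "B * ?gi = 1\<^sub>m d" .
    have inv: "mat_inv ?gi = B" by (rule mat_inv_eq[OF gi_car B_car inv1 inv2])
    have Prho_car: "\<Phi> \<rho> \<in> carrier_mat d d" by (rule cp(1)[OF rho_car])
    have LHS: "epm_avg mi Ei Qi mf Ef Qf \<Phi> \<rho>
           (\<lambda>\<Delta>E. complex_of_real (exp (- \<beta> * (\<Delta>E -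
              (- (1 / \<beta>) * ln (part_fn d mf Ef Qf \<beta> / part_fn d mi Ei Qi \<beta>))))))
         = tr (B * \<rho>) * tr (?gf * \<Phi> \<rho>)"
    proof -
      have e: "\<And>l k. complex_of_real (exp (- \<beta> * (Ef k - Ei l - (- (1 / \<beta>) * ln (?Zf / ?Zi)))))
          = complex_of_real (?Zi * exp (\<beta> * Ei l)) * complex_of_real (exp (- \<beta> * Ef k) / ?Zf)"
        by (simp only: exp_identity[OF assms(4) Zi Zf] of_real_mult)
      have "epm_avg mi Ei Qi mf Ef Qf \<Phi> \<rho>
           (\<lambda>\<Delta>E. complex_of_real (exp (- \<beta> * (\<Delta>E -
              (- (1 / \<beta>) * ln (part_fn d mf Ef Qf \<beta> / part_fn d mi Ei Qi \<beta>))))))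
          = (\<Sum>l<mi. \<Sum>k<mf. (complex_of_real (?Zi * exp (\<beta> * Ei l)) * tr (\<rho> * Qi l))
               * (complex_of_real (exp (- \<beta> * Ef k) / ?Zf) * tr (\<Phi> \<rho> * Qf k)))"
        unfolding epm_avg_def e by (intro sum.cong refl) (simp only: mult_ac)
      also have "\<dots> = (\<Sum>l<mi. complex_of_real (?Zi * exp (\<beta> * Ei l)) * tr (\<rho> * Qi l))
                    * (\<Sum>k<mf. complex_of_real (exp (- \<beta> * Ef k) / ?Zf) * tr (\<Phi> \<rho> * Qf k))"
        by (simp add: sum_product)
      also have "(\<Sum>l<mi. complex_of_real (?Zi * exp (\<beta> * Ei l)) * tr (\<rho> * Qi l)) = tr (\<rho> * B)"
        unfolding B_def by (rule tr_msum[symmetric]) (auto simp: rho_car si)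
      also have "(\<Sum>k<mf. complex_of_real (exp (- \<beta> * Ef k) / ?Zf) * tr (\<Phi> \<rho> * Qf k)) = tr (\<Phi> \<rho> * ?gf)"
        unfolding gf by (rule tr_msum[symmetric]) (auto simp: Prho_car sf)
      finally show ?thesis using tr_comm[OF rho_car B_car] tr_comm[OF Prho_car gf_car] by simp
    qed
    have c1: "(1 - a) \<cdot>\<^sub>r ?gi \<in> carrier_mat d d" "(a * (1 - c)) \<cdot>\<^sub>r \<tau>d \<in> carrier_mat d d"
      "(a * c) \<cdot>\<^sub>r \<tau>c \<in> carrier_mat d d"
      using gi_car td_car tc_car by (auto simp: rsmult_def)
    have rho: "\<rho> = ((1 - a) \<cdot>\<^sub>r ?gi + (a * (1 - c)) \<cdot>\<^sub>r \<tau>d) + (a * c) \<cdot>\<^sub>r \<tau>c"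
      by (rule assms(16))
    have T1: "tr (B * \<rho>) = complex_of_real ((1 - a) * real d)
            + complex_of_real (a * (1 - c)) * tr (B * \<tau>d)
            + complex_of_real (a * c) * tr (B * \<tau>c)"
      unfolding rho using c1 gi_car td_car tc_car B_car
      by (simp add: tr_add tr_smult inv2 tr_one)
    have Prho: "\<Phi> \<rho> = ((1 - a) \<cdot>\<^sub>r \<Phi> ?gi + (a * (1 - c)) \<cdot>\<^sub>r \<Phi> \<tau>d) + (a * c) \<cdot>\<^sub>r \<Phi> \<tau>c"
      unfolding rho using c1 gi_car td_car tc_car
      by (simp add: cp(2) cp(3) rsmult_def)
    have T2: "tr (?gf * \<Phi> \<rho>) = complex_of_real (1 - a) * tr (?gf * \<Phi> ?gi)
            + complex_of_real (a * (1 - c)) * tr (?gf * \<Phi> \<tau>d)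
            + complex_of_real (a * c) * tr (?gf * \<Phi> \<tau>c)"
      unfolding Prho using cp(1)[OF gi_car] cp(1)[OF td_car] cp(1)[OF tc_car] gf_car
      by (simp add: tr_add tr_smult rsmult_def[symmetric])
    show ?thesis unfolding LHS T1 T2 inv ..
  qed
qed

end
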